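(* Let $p:\mathbb{N}\to[0,1]$ satisfy density ($p(n)\to\tilde p>0$), root growth ($p(n)=Kn^{-\beta}$, $K>0$, $0<\beta<1$) or logarithmic growth ($p(n)=K\log(n)/n$, $K>0$). Then for every $k\in\mathbb{N}$ and every $\epsilon,\delta,\theta>0$ there is $N\in\mathbb{N}$ such that for all $n\ge N$, with probability at least $1-\theta$ over $G\sim\mathrm{ER}(n,p(n))$, the proportion of nodes $v$ with $\|\mathrm{rw}_k(v)\|<\epsilon$ is at least $1-\delta$.
   Context: $\mathrm{ER}(n,p)$ is the Erdős–Rényi random graph. For a node $v$, $\mathrm{rw}_k(v)\in\mathbb{R}^k$ is the vector whose $j$-th entry ($1\le j\le k$) is the probability that a simple random walk of $j$ steps started at $v$ is at $v$ after $j$ steps ($\mathrm{rw}_k(v)=0$ if $v$ is isolated). *)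

theory Defs
  imports "HOL-Probability.Probability"
begin

text \<open>A graph on the vertex set {0..<n} is encoded by its edge indicator
  on ordered pairs (i,j) with i < j < n; outside that set the value is False.\<close>

definition er_pairs :: "nat \<Rightarrow> (nat \<times> nat) set" where
  "er_pairs n = {(i, j). i < j \<and> j < n}"

definition ER :: "nat \<Rightarrow> real \<Rightarrow> (nat \<times> nat \<Rightarrow> bool) pmf" where
  "ER n q = Pi_pmf (er_pairs n) False (\<lambda>_. bernoulli_pmf q)"

definition adj :: "(nat \<times> nat \<Rightarrow> bool) \<Rightarrow> nat \<Rightarrow> nat \<Rightarrow> bool" where
  "adj G u w = (if u < w then G (u, w) else if w < u then G (w, u) else False)"

definition degree :: "nat \<Rightarrow> (nat \<times> nat \<Rightarrow> bool) \<Rightarrow> nat \<Rightarrow> nat" where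
  "degree n G u = card {w. w < n \<and> adj G u w}"

text \<open>Transition probability of the simple random walk (zero row at isolated vertices).\<close>
definition trans :: "nat \<Rightarrow> (nat \<times> nat \<Rightarrow> bool) \<Rightarrow> nat \<Rightarrow> nat \<Rightarrow> real" where
  "trans n G u w = (if adj G u w then 1 / real (degree n G u) else 0)"

fun walk_dist :: "nat \<Rightarrow> (nat \<times> nat \<Rightarrow> bool) \<Rightarrow> nat \<Rightarrow> nat \<Rightarrow> nat \<Rightarrow> real" where
  "walk_dist n G v 0 w = (if w = v then 1 else 0)"
| "walk_dist n G v (Suc t) w = (\<Sum>u<n. walk_dist n G v t u * trans n G u w)"

definition rw_entry :: "nat \<Rightarrow> (nat \<times> nat \<Rightarrow> bool) \<Rightarrow> nat \<Rightarrow> nat \<Rightarrow> real" where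
  "rw_entry n G v j = (if degree n G v = 0 then 0 else walk_dist n G v j v)"

definition rw_norm :: "nat \<Rightarrow> (nat \<times> nat \<Rightarrow> bool) \<Rightarrow> nat \<Rightarrow> nat \<Rightarrow> real" where
  "rw_norm n G k v = sqrt (\<Sum>j\<in>{1..k}. (rw_entry n G v j)\<^sup>2)"

end

theory Submission
  imports Defs "HOL-Real_Asymp.Real_Asymp"
begin

lemma adj_sym: "adj G u w = adj G w u" by (auto simp: adj_def)

lemma trans_nonneg: "trans n G u w \<ge> 0" by (simp add: trans_def)

lemma walk_nonneg: "walk_dist n G v t w \<ge> 0"
  by (induction t arbitrary: w) (auto intro!: sum_nonneg mult_nonneg_nonneg simp: trans_nonneg)

lemma trans_row: "(\<Sum>w<n. trans n G u w) \<le> 1"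
proof -
  have "(\<Sum>w<n. trans n G u w) = (\<Sum>w\<in>{w. w < n \<and> adj G u w}. 1 / real (degree n G u))"
    unfolding trans_def by (rule sum.mono_neutral_cong_right) auto
  also have "\<dots> = real (degree n G u) * (1 / real (degree n G u))"
    by (simp add: degree_def)
  also have "\<dots> \<le> 1" by (cases "degree n G u = 0") auto
  finally show ?thesis .
qed

lemma walk_sum: "(\<Sum>w<n. walk_dist n G v t w) \<le> 1" if "v < n"
proof (induction t)
  case 0
  then show ?case using that by (simp add: sum.delta' )
next
  case (Suc t)
  have "(\<Sum>w<n. walk_dist n G v (Suc t) w) = (\<Sum>w<n. \<Sum>u<n. walk_dist n G v t u * trans n G u w)"
    by simp
  also have "\<dots> = (\<Sum>u<n. \<Sum>w<n. walk_dist n G v t u * trans n G u w)"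
    by (rule sum.swap)
  also have "\<dots> = (\<Sum>u<n. walk_dist n G v t u * (\<Sum>w<n. trans n G u w))"
    by (simp add: sum_distrib_left)
  also have "\<dots> \<le> (\<Sum>u<n. walk_dist n G v t u)"
    by (intro sum_mono mult_right_le_one_le walk_nonneg trans_row sum_nonneg trans_nonneg)
  finally show ?case using Suc by linarith
qed

lemma walk_return_le:
  assumes "v < n" "D > 0" "\<And>u. u < n \<Longrightarrow> adj G u v \<Longrightarrow> degree n G u \<ge> D"
  shows "walk_dist n G v (Suc t) v \<le> 1 / real D"
proof -
  have "walk_dist n G v (Suc t) v \<le> (\<Sum>u<n. walk_dist n G v t u * (1 / real D))"
  proof (simp only: walk_dist.simps, intro sum_mono mult_left_mono walk_nonneg)
    fix u assume "u \<in> {..<n}"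
    then show "trans n G u v \<le> 1 / real D"
      using assms(2) assms(3)[of u] by (auto simp: trans_def intro!: divide_left_mono)
  qed
  also have "\<dots> = (\<Sum>u<n. walk_dist n G v t u) * (1 / real D)" by (rule sum_distrib_right[symmetric])
  also have "\<dots> \<le> 1 * (1 / real D)"
    by (intro mult_right_mono walk_sum assms(1)) simp
  finally show ?thesis by simp
qed

lemma rw_norm_le:
  assumes "v < n" "D > 0" "\<And>u. u < n \<Longrightarrow> adj G u v \<Longrightarrow> degree n G u \<ge> D"
  shows "rw_norm n G k v \<le> sqrt (real k) / real D"
proof -
  have e: "(rw_entry n G v j)\<^sup>2 \<le> (1 / real D)\<^sup>2" if jk: "j \<in> {1..k}" for j
  proof -
    obtain t where j: "j = Suc t" using jk by (cases j) auto
    have "0 \<le> rw_entry n G v j" "rw_entry n G v j \<le> 1 / real D"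
      using walk_return_le[OF assms, of t] walk_nonneg[of n G v j v] assms(2)
      by (auto simp: rw_entry_def j)
    then show ?thesis by (intro power_mono) auto
  qed
  have "rw_norm n G k v \<le> sqrt (\<Sum>j\<in>{1..k}. (1 / real D)\<^sup>2)"
    unfolding rw_norm_def by (intro real_sqrt_le_mono sum_mono e)
  also have "\<dots> = sqrt (real k) / real D"
    using assms(2) by (simp add: real_sqrt_mult real_sqrt_divide power_divide)
  finally show ?thesis .
qed

lemma good_count:
  assumes D: "D > 0" "sqrt (real k) / real D < \<epsilon>"
    and low: "real (card {u. u < n \<and> degree n G u < D}) * real D \<le> \<delta> * real n"
  shows "real (card {v. v < n \<and> rw_norm n G k v < \<epsilon>}) \<ge> (1 - \<delta>) * real n"
proof -
  define Low where "Low = {u. u < n \<and> degree n G u < D}"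
  define Bad where "Bad = (\<Union>u\<in>Low. {v. v < n \<and> adj G u v})"
  have finLow: "finite Low" unfolding Low_def by auto
  have sub: "{..<n} - Bad \<subseteq> {v. v < n \<and> rw_norm n G k v < \<epsilon>}"
  proof
    fix v assume v: "v \<in> {..<n} - Bad"
    have "rw_norm n G k v \<le> sqrt (real k) / real D"
    proof (rule rw_norm_le)
      show "v < n" using v by auto
      show "D > 0" by fact
      fix u assume u: "u < n" "adj G u v"
      show "D \<le> degree n G u"
      proof (rule ccontr)
        assume "\<not> D \<le> degree n G u"
        then have "u \<in> Low" using u by (auto simp: Low_def)
        then have "v \<in> Bad" using u v by (auto simp: Bad_def)
        then show False using v by blast
      qed
    qed
    then show "v \<in> {v. v < n \<and> rw_norm n G k v < \<epsilon>}" using v D by auto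
  qed
  have "card Bad \<le> (\<Sum>u\<in>Low. card {v. v < n \<and> adj G u v})"
    unfolding Bad_def by (rule card_UN_le[OF finLow])
  also have "\<dots> \<le> (\<Sum>u\<in>Low. D)"
    by (intro sum_mono) (auto simp: Low_def degree_def)
  also have "\<dots> = card Low * D" by simp
  finally have cbn: "card Bad \<le> card Low * D" .
  have "real (card Bad) \<le> real (card Low * D)" using cbn by (simp only: of_nat_le_iff)
  then have cb: "real (card Bad) \<le> \<delta> * real n" using low unfolding Low_def by simp
  have bsub: "Bad \<subseteq> {..<n}" unfolding Bad_def by auto
  have finB: "finite Bad" using bsub finite_subset by blast
  have cd: "card ({..<n} - Bad) = n - card Bad" using bsub finB by (simp add: card_Diff_subset)
  have cbn2: "card Bad \<le> n" using card_mono[OF finite_lessThan bsub] by simp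
  have fg: "finite {v. v < n \<and> rw_norm n G k v < \<epsilon>}" by simp
  have "card ({..<n} - Bad) \<le> card {v. v < n \<and> rw_norm n G k v < \<epsilon>}"
    by (rule card_mono[OF fg sub])
  then have "real n - real (card Bad) \<le> real (card {v. v < n \<and> rw_norm n G k v < \<epsilon>})"
    using cd cbn2 by (simp add: of_nat_diff)
  then show ?thesis using cb by (simp add: algebra_simps)
qed

lemma fin_er: "finite (er_pairs n)"
  by (rule finite_subset[of _ "{..<n} \<times> {..<n}"]) (auto simp: er_pairs_def)

lemma card_star:
  assumes "u < n"
  shows "card {e \<in> er_pairs n. (fst e = u \<or> snd e = u) \<and> R e} = card {w. w < n \<and> w \<noteq> u \<and> R (min u w, max u w)}"
proof -
  let ?A = "{w. w < n \<and> w \<noteq> u \<and> R (min u w, max u w)}"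
  let ?B = "{e \<in> er_pairs n. (fst e = u \<or> snd e = u) \<and> R e}"
  have "bij_betw (\<lambda>w. (min u w, max u w)) ?A ?B"
  proof (rule bij_betw_byWitness[where f'="\<lambda>e. if fst e = u then snd e else fst e"])
    show "\<forall>a\<in>?A. (if fst (min u a, max u a) = u then snd (min u a, max u a) else fst (min u a, max u a)) = a"
      by (auto simp: min_def max_def)
    show "\<forall>e\<in>?B. (min u (if fst e = u then snd e else fst e), max u (if fst e = u then snd e else fst e)) = e"
    proof
      fix e assume e: "e \<in> ?B"
      obtain i j where ij: "e = (i, j)" by (cases e)
      show "(min u (if fst e = u then snd e else fst e), max u (if fst e = u then snd e else fst e)) = e"
        using e unfolding ij er_pairs_def by (cases "i = u") auto
    qed
    show "(\<lambda>w. (min u w, max u w)) ` ?A \<subseteq> ?B"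
      using assms by (auto simp: er_pairs_def min_def max_def split: if_split_asm)
    show "(\<lambda>e. if fst e = u then snd e else fst e) ` ?B \<subseteq> ?A"
    proof
      fix w assume "w \<in> (\<lambda>e. if fst e = u then snd e else fst e) ` ?B"
      then obtain e where e: "e \<in> ?B" and we: "w = (if fst e = u then snd e else fst e)" by blast
      obtain i j where eij: "e = (i, j)" by (cases e)
      have ij: "(i, j) \<in> ?B" and w: "w = (if i = u then j else i)" using e we eij by auto
      show "w \<in> ?A" using ij unfolding w er_pairs_def by (cases "i = u") (auto simp: min_def max_def)
    qed
  qed
  then show ?thesis by (simp add: bij_betw_same_card)
qed
lemma exp_half_degree:
  assumes u: "u < n" and q: "0 \<le> q" "q \<le> 1"
  shows "measure_pmf.expectation (ER n q) (\<lambda>G. (1/2::real) ^ degree n G u) = (1 - q/2) ^ (n - 1)"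
proof -
  define f where "f = (\<lambda>(e::nat\<times>nat) (b::bool). if (fst e = u \<or> snd e = u) \<and> b then 1/2 else (1::real))"
  have eq: "(1/2::real) ^ degree n G u = (\<Prod>e\<in>er_pairs n. f e (G e))" for G
  proof -
    have "(\<Prod>e\<in>er_pairs n. f e (G e)) = (\<Prod>e\<in>{e \<in> er_pairs n. (fst e = u \<or> snd e = u) \<and> G e}. 1/2)"
      by (subst prod.inter_filter[OF fin_er]) (simp add: f_def)
    also have "\<dots> = (1/2) ^ card {e \<in> er_pairs n. (fst e = u \<or> snd e = u) \<and> G e}" by simp
    also have "card {e \<in> er_pairs n. (fst e = u \<or> snd e = u) \<and> G e} = card {w. w < n \<and> w \<noteq> u \<and> G (min u w, max u w)}"
      by (rule card_star[OF u])
    also have "{w. w < n \<and> w \<noteq> u \<and> G (min u w, max u w)} = {w. w < n \<and> adj G u w}"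
      by (auto simp: adj_def min_def max_def split: if_splits)
    finally show ?thesis by (simp add: degree_def)
  qed
  have "measure_pmf.expectation (ER n q) (\<lambda>G. (1/2::real) ^ degree n G u)
        = measure_pmf.expectation (ER n q) (\<lambda>G. \<Prod>e\<in>er_pairs n. f e (G e))"
    by (rule Bochner_Integration.integral_cong[OF refl]) (rule eq)
  also have "\<dots> = (\<Prod>e\<in>er_pairs n. measure_pmf.expectation (bernoulli_pmf q) (f e))"
    unfolding ER_def
    by (rule expectation_prod_Pi_pmf[OF fin_er])
       (simp_all add: f_def integrable_measure_pmf_finite)
  also have "\<dots> = (\<Prod>e\<in>er_pairs n. if fst e = u \<or> snd e = u then 1 - q/2 else 1)"
    using q by (intro prod.cong refl) (simp add: f_def)
  also have "\<dots> = (\<Prod>e\<in>{e \<in> er_pairs n. (fst e = u \<or> snd e = u) \<and> True}. 1 - q/2)"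
    by (subst prod.inter_filter[OF fin_er]) simp
  also have "\<dots> = (1 - q/2) ^ card {w. w < n \<and> w \<noteq> u \<and> True}"
    by (simp only: prod_constant card_star[OF u])
  also have "{w. w < n \<and> w \<noteq> u \<and> True} = {..<n} - {u}" by auto
  finally show ?thesis using u by simp
qed


lemma integrable_half_deg: "integrable (measure_pmf (ER n q)) (\<lambda>G. (1/2::real) ^ degree n G u)"
  by (intro measure_pmf.integrable_const_bound[where B=1]) (auto intro!: AE_I2 power_le_one)

lemma markov_Y:
  assumes q: "0 \<le> q" "q \<le> 1" and c: "c > 0"
  shows "measure_pmf.prob (ER n q) {G. (\<Sum>u<n. (1/2::real) ^ degree n G u) \<ge> c}
         \<le> real n * (1 - q/2) ^ (n - 1) / c"
proof -
  have E: "measure_pmf.expectation (ER n q) (\<lambda>G. \<Sum>u<n. (1/2::real) ^ degree n G u)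
        = real n * (1 - q/2) ^ (n - 1)"
  proof -
    have "measure_pmf.expectation (ER n q) (\<lambda>G. \<Sum>u<n. (1/2::real) ^ degree n G u)
        = (\<Sum>u<n. measure_pmf.expectation (ER n q) (\<lambda>G. (1/2::real) ^ degree n G u))"
      by (rule Bochner_Integration.integral_sum[where f="\<lambda>u G. (1/2::real) ^ degree n G u"]) (rule integrable_half_deg)
    also have "\<dots> = (\<Sum>u<n. (1 - q/2) ^ (n - 1))"
      by (rule sum.cong[OF refl]) (simp add: exp_half_degree q)
    finally show ?thesis by simp
  qed
  have "measure_pmf.prob (ER n q) {G \<in> space (measure_pmf (ER n q)). (\<Sum>u<n. (1/2::real) ^ degree n G u) \<ge> c}
        \<le> measure_pmf.expectation (ER n q) (\<lambda>G. \<Sum>u<n. (1/2::real) ^ degree n G u) / c"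
    by (rule integral_Markov_inequality_measure) (auto simp: c integrable_half_deg intro!: AE_I2 sum_nonneg)
  then show ?thesis using E by simp
qed

lemma one_minus_pow_le:
  assumes "0 \<le> x" "x \<le> 1"
  shows "(1 - x) ^ m \<le> exp (- (x * real m))"
proof -
  have "(1 - x) ^ m \<le> exp (- x) ^ m"
    using assms exp_ge_add_one_self[of "-x"] by (intro power_mono) auto
  also have "\<dots> = exp (- (x * real m))" using exp_of_nat_mult[of m "-x"] by (simp add: mult.commute)
  finally show ?thesis .
qed

lemma growth_tendsto:
  fixes p :: "nat \<Rightarrow> real"
  assumes p_range: "\<And>n. 0 \<le> p n \<and> p n \<le> 1"
    and growth:
      "(\<exists>pt. pt > 0 \<and> p \<longlonglongrightarrow> pt)
       \<or> (\<exists>K \<beta>. K > 0 \<and> 0 < \<beta> \<and> \<beta> < 1 \<and>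
             (\<forall>\<^sub>F n in sequentially. p n = K * real n powr (-\<beta>)))
       \<or> (\<exists>K. K > 0 \<and> (\<forall>\<^sub>F n in sequentially. p n = K * ln (real n) / real n))"
  shows "(\<lambda>n. (1 - p n / 2) ^ (n - 1)) \<longlonglongrightarrow> 0"
proof -
  have H: "filterlim (\<lambda>n. p n * (real n - 1)) at_top sequentially"
    using growth
  proof (elim disjE exE conjE)
    fix pt assume "pt > 0" "p \<longlonglongrightarrow> pt"
    moreover have "filterlim (\<lambda>n::nat. real n - 1) at_top sequentially" by real_asymp
    ultimately show ?thesis by (intro filterlim_tendsto_pos_mult_at_top[of p pt])
  next
    fix K \<beta> :: real assume K: "K > 0" "0 < \<beta>" "\<beta> < 1"
      and ev: "\<forall>\<^sub>F n in sequentially. p n = K * real n powr (-\<beta>)"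
    have lim: "filterlim (\<lambda>n::nat. K * real n powr (-\<beta>) * (real n - 1)) at_top sequentially"
      using K by real_asymp
    have eq: "\<forall>\<^sub>F n in sequentially. K * real n powr (-\<beta>) * (real n - 1) = p n * (real n - 1)"
      using ev by (auto elim: eventually_mono)
    have "filterlim (\<lambda>n::nat. K * real n powr (-\<beta>) * (real n - 1)) at_top sequentially = filterlim (\<lambda>n. p n * (real n - 1)) at_top sequentially"
      by (rule filterlim_cong[OF refl refl eq])
    with lim show ?thesis by blast
  next
    fix K :: real assume K: "K > 0"
      and ev: "\<forall>\<^sub>F n in sequentially. p n = K * ln (real n) / real n"
    have lim: "filterlim (\<lambda>n::nat. K * ln (real n) / real n * (real n - 1)) at_top sequentially"
      using K by real_asymp
    have eq: "\<forall>\<^sub>F n in sequentially. K * ln (real n) / real n * (real n - 1) = p n * (real n - 1)"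
      using ev by (auto elim: eventually_mono)
    have "filterlim (\<lambda>n::nat. K * ln (real n) / real n * (real n - 1)) at_top sequentially = filterlim (\<lambda>n. p n * (real n - 1)) at_top sequentially"
      by (rule filterlim_cong[OF refl refl eq])
    with lim show ?thesis by blast
  qed
  have H2: "filterlim (\<lambda>n. p n * (real n - 1) / 2) at_top sequentially"
    using filterlim_tendsto_pos_mult_at_top[OF tendsto_const[of "1/2::real"] _ H] by (simp add: mult.commute)
  have Z: "(\<lambda>n. exp (- (p n * (real n - 1) / 2))) \<longlonglongrightarrow> 0"
    using filterlim_compose[OF exp_at_bot filterlim_compose[OF filterlim_uminus_at_bot_at_top H2]]
    by (simp add: o_def)
  show ?thesis
  proof (rule tendsto_sandwich[OF _ _ tendsto_const Z])
    show "\<forall>\<^sub>F n in sequentially. 0 \<le> (1 - p n / 2) ^ (n - 1)"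
    proof (intro always_eventually allI zero_le_power)
      fix n show "0 \<le> 1 - p n / 2" using p_range[of n] by simp
    qed
    show "\<forall>\<^sub>F n in sequentially. (1 - p n / 2) ^ (n - 1) \<le> exp (- (p n * (real n - 1) / 2))"
      using eventually_ge_at_top[of "1::nat"]
    proof (rule eventually_mono)
      fix n :: nat assume n: "1 \<le> n"
      have "(1 - p n / 2) ^ (n - 1) \<le> exp (- (p n / 2 * real (n - 1)))"
        using p_range[of n] by (intro one_minus_pow_le) auto
      also have "real (n - 1) = real n - 1" using n by simp
      finally show "(1 - p n / 2) ^ (n - 1) \<le> exp (- (p n * (real n - 1) / 2))" by simp
    qed
  qed
qed

theorem mainTheorem5:
  fixes p :: "nat \<Rightarrow> real"
  assumes p_range: "\<And>n. 0 \<le> p n \<and> p n \<le> 1"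
    and growth:
      "(\<exists>pt. pt > 0 \<and> p \<longlonglongrightarrow> pt)
       \<or> (\<exists>K \<beta>. K > 0 \<and> 0 < \<beta> \<and> \<beta> < 1 \<and>
             (\<forall>\<^sub>F n in sequentially. p n = K * real n powr (-\<beta>)))
       \<or> (\<exists>K. K > 0 \<and> (\<forall>\<^sub>F n in sequentially. p n = K * ln (real n) / real n))"
  shows "\<forall>(k::nat) (\<epsilon>::real) (\<delta>::real) (\<theta>::real). \<epsilon> > 0 \<longrightarrow> \<delta> > 0 \<longrightarrow> \<theta> > 0 \<longrightarrow>
           (\<exists>N::nat. \<forall>n\<ge>N.
              measure_pmf.prob (ER n (p n))
                {G. real (card {v. v < n \<and> rw_norm n G k v < \<epsilon>}) \<ge> (1 - \<delta>) * real n}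
              \<ge> 1 - \<theta>)"
proof (intro allI impI)
  fix k :: nat and \<epsilon> \<delta> \<theta> :: real
  assume \<epsilon>: "\<epsilon> > 0" and \<delta>: "\<delta> > 0" and \<theta>: "\<theta> > 0"
  define D :: nat where "D = nat \<lceil>sqrt (real k) / \<epsilon>\<rceil> + 1"
  have D0: "D > 0" by (simp add: D_def)
  have "sqrt (real k) / \<epsilon> < real D"
    using of_nat_ceiling[of "sqrt (real k) / \<epsilon>"] by (simp add: D_def)
  then have Deps: "sqrt (real k) / real D < \<epsilon>"
    using \<epsilon> D0 by (simp add: field_simps)
  define C where "C = real D * 2 ^ D / \<delta>"
  have C0: "C > 0" using D0 \<delta> by (simp add: C_def)
  have "\<forall>\<^sub>F n in sequentially. (1 - p n / 2) ^ (n - 1) < \<theta> / C"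
    using order_tendstoD(2)[OF growth_tendsto[OF p_range growth]] \<theta> C0 by simp
  moreover have "\<forall>\<^sub>F n in sequentially. n \<ge> 1" by (rule eventually_ge_at_top)
  ultimately have "\<forall>\<^sub>F n in sequentially. (1 - p n / 2) ^ (n - 1) < \<theta> / C \<and> n \<ge> 1"
    by (rule eventually_conj)
  then obtain N where N: "\<And>n. n \<ge> N \<Longrightarrow> (1 - p n / 2) ^ (n - 1) < \<theta> / C \<and> n \<ge> 1"
    unfolding eventually_sequentially by blast
  show "\<exists>N::nat. \<forall>n\<ge>N.
          measure_pmf.prob (ER n (p n))
            {G. real (card {v. v < n \<and> rw_norm n G k v < \<epsilon>}) \<ge> (1 - \<delta>) * real n} \<ge> 1 - \<theta>"
  proof (intro exI allI impI)
    fix n assume nN: "n \<ge> N"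
    have small: "(1 - p n / 2) ^ (n - 1) < \<theta> / C" and n1: "n \<ge> 1" using N[OF nN] by auto
    define q where "q = p n"
    have q: "0 \<le> q" "q \<le> 1" using p_range[of n] by (auto simp: q_def)
    define Y where "Y = (\<lambda>G. \<Sum>u<n. (1/2::real) ^ degree n G u)"
    define c where "c = \<delta> * real n / (real D * 2 ^ D)"
    have c0: "c > 0" using \<delta> n1 D0 by (simp add: c_def)
    have mk: "measure_pmf.prob (ER n q) {G. Y G \<ge> c} \<le> real n * (1 - q/2) ^ (n - 1) / c"
      unfolding Y_def by (rule markov_Y[OF q c0])
    also have "real n * (1 - q/2) ^ (n - 1) / c = C * (1 - q/2) ^ (n - 1)"
      using n1 \<delta> D0 by (simp add: c_def C_def field_simps)
    also have "\<dots> \<le> \<theta>" using small C0 unfolding q_def by (simp add: field_simps)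
    finally have mk2: "measure_pmf.prob (ER n q) {G. Y G \<ge> c} \<le> \<theta>" .
    have sub: "- {G. Y G \<ge> c} \<subseteq> {G. real (card {v. v < n \<and> rw_norm n G k v < \<epsilon>}) \<ge> (1 - \<delta>) * real n}"
    proof
      fix G assume "G \<in> - {G. Y G \<ge> c}"
      then have YG: "Y G < c" by auto
      define Low where "Low = {u. u < n \<and> degree n G u < D}"
      have "real (card Low) * (1/2) ^ D = (\<Sum>u\<in>Low. (1/2::real) ^ D)" by simp
      also have "\<dots> \<le> (\<Sum>u\<in>Low. (1/2::real) ^ degree n G u)"
        by (intro sum_mono power_decreasing) (auto simp: Low_def)
      also have "\<dots> \<le> Y G" unfolding Y_def
        by (intro sum_mono2) (auto simp: Low_def)
      finally have "real (card Low) * (1/2) ^ D < c" using YG by simp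
      then have "real (card Low) * real D < \<delta> * real n"
        using D0 by (simp add: c_def field_simps power_divide)
      then show "G \<in> {G. real (card {v. v < n \<and> rw_norm n G k v < \<epsilon>}) \<ge> (1 - \<delta>) * real n}"
        using good_count[OF D0 Deps, of n G \<delta>] unfolding Low_def by simp
    qed
    have "1 - \<theta> \<le> 1 - measure_pmf.prob (ER n q) {G. Y G \<ge> c}" using mk2 by simp
    also have "\<dots> = measure_pmf.prob (ER n q) (- {G. Y G \<ge> c})"
      using measure_pmf.prob_compl[of "{G. Y G \<ge> c}" "ER n q"] by (simp add: Compl_eq_Diff_UNIV)
    also have "\<dots> \<le> measure_pmf.prob (ER n q) {G. real (card {v. v < n \<and> rw_norm n G k v < \<epsilon>}) \<ge> (1 - \<delta>) * real n}"
      by (rule measure_pmf.finite_measure_mono[OF sub]) simp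
    finally show "measure_pmf.prob (ER n (p n))
            {G. real (card {v. v < n \<and> rw_norm n G k v < \<epsilon>}) \<ge> (1 - \<delta>) * real n} \<ge> 1 - \<theta>"
      by (simp add: q_def)
  qed
qed

end
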